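(* Let $\kappa\in(0,1)$ and $w\in\mathbb{R}$, and let \[ f_{\kappa,w}(\lambda)=\frac{c_1(\kappa)}{2}\Big(K_{\frac{\kappa-1}{2}}(|\lambda+w|)\,|\lambda+w|^{\frac{\kappa-1}{2}}+K_{\frac{\kappa-1}{2}}(|\lambda-w|)\,|\lambda-w|^{\frac{\kappa-1}{2}}\Big),\qquad \lambda\in\mathbb{R}\setminus\{w,-w\}. \] Then there is a function $\theta_\kappa:[0,\infty)\to\mathbb{R}$ such that for all $\lambda\in\mathbb{R}\setminus\{w,-w\}$ \[ f_{\kappa,w}(\lambda)=\frac{c_2(\kappa)}{2}\left(\frac{1-\theta_\kappa(|\lambda+w|)}{|\lambda+w|^{1-\kappa}}+\frac{1-\theta_\kappa(|\lambda-w|)}{|\lambda-w|^{1-\kappa}}\right), \] and $\theta_\kappa$ is bounded on $[0,\infty)$, satisfies $\theta_\kappa(u)\le 1$ for all $u\in[0,\infty)$, and \[ \theta_\kappa(u)=\frac{\Gamma\left(\frac{\kappa+1}{2}\right)}{2^{1-\kappa}\Gamma\left(\frac{3-\kappa}{2}\right)}|u|^{1-\kappa}-\frac{1}{2(\kappa+1)}|u|^2+o(|u|^2),\qquad u\to0. \] Moreover, for $w=0$, \[ f_{\kappa,0}(\lambda)\sim \frac{c_1(\kappa)\sqrt{\pi}}{\sqrt 2}\,|\lambda|^{\frac{\kappa-2}{2}}e^{-|\lambda|},\qquad |\lambda|\to\infty. \]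
   Context: $K_\nu$ denotes the modified Bessel function of the second kind of order $\nu$, and $\Gamma$ the Gamma function. The constants are $c_1(\kappa)=\dfrac{2^{\frac{1-\kappa}{2}}}{\sqrt{\pi}\,\Gamma(\kappa/2)}$ and $c_2(\kappa)=\big(2\Gamma(\kappa)\cos(\kappa\pi/2)\big)^{-1}$. For $w\neq0$, $f_{\kappa,w}$ is the spectral density of the covariance function $r(x)=\cos(wx)/(1+x^2)^{\kappa/2}$ on $\mathbb{R}$. *)

theory Defs
  imports "HOL-Analysis.Analysis" "HOL-Library.Landau_Symbols"
begin

text \<open>Modified Bessel function of the second kind, via the standard integral
  representation K_nu(x) = integral over [0,inf) of exp(-x cosh t) cosh(nu t), for x > 0.\<close>
definition besselK :: "real \<Rightarrow> real \<Rightarrow> real" where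
  "besselK nu x = integral {0..} (\<lambda>t. exp (- x * cosh t) * cosh (nu * t))"

definition c1 :: "real \<Rightarrow> real" where
  "c1 kappa = 2 powr ((1 - kappa) / 2) / (sqrt pi * Gamma (kappa / 2))"

definition c2 :: "real \<Rightarrow> real" where
  "c2 kappa = 1 / (2 * Gamma kappa * cos (kappa * pi / 2))"

definition f_dens :: "real \<Rightarrow> real \<Rightarrow> real \<Rightarrow> real" where
  "f_dens kappa w lam = c1 kappa / 2 *
     (besselK ((kappa - 1) / 2) \<bar>lam + w\<bar> * \<bar>lam + w\<bar> powr ((kappa - 1) / 2)
    + besselK ((kappa - 1) / 2) \<bar>lam - w\<bar> * \<bar>lam - w\<bar> powr ((kappa - 1) / 2))"

end

theory Submission
  imports Defs "HOL-Probability.Distributions" "HOL-Real_Asymp.Real_Asymp"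
begin

definition G :: "real \<Rightarrow> real \<Rightarrow> real" where
  "G a y = integral {0<..} (\<lambda>t. exp (-t - y/t) * t powr (a-1))"

lemma Gamma_int':
  fixes a :: real assumes "a > 0"
  shows "((\<lambda>t. t powr (a-1) / exp t) has_integral Gamma a) {0<..}"
proof -
  have "((\<lambda>t. t powr (a-1) / exp t) has_integral Gamma a) {0..}"
    by (rule Gamma_integral_real) fact
  moreover have "{0..} - {0<..} = {0::real}" "{0<..} - {0..} = ({}::real set)" by auto
  ultimately show ?thesis
    by (subst has_integral_spike_set_eq[of _ "{0..}"]) (auto intro: negligible_subset[of "{0}"])
qed

lemma Gamma_abs:
  fixes a :: real assumes "a > 0"
  shows "(\<lambda>t. t powr (a-1) / exp t) absolutely_integrable_on {0<..}"
  by (rule nonnegative_absolutely_integrable_1) (use Gamma_int'[OF assms] in auto)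

lemma G_meas: fixes a y :: real shows "(\<lambda>t. exp (-t - y/t) * t powr (a-1)) \<in> borel_measurable (lebesgue_on {0<..})"
  by (rule continuous_imp_measurable_on_sets_lebesgue) (intro continuous_intros, auto)

lemma G_int1:
  fixes a y :: real assumes "a > 0" "y \<ge> 0"
  shows "(\<lambda>t. exp (-t - y/t) * t powr (a-1)) absolutely_integrable_on {0<..}"
proof (rule measurable_bounded_by_integrable_imp_absolutely_integrable[OF G_meas])
  show "(\<lambda>t. t powr (a-1) / exp t) integrable_on {0<..}"
    using Gamma_int'[OF assms(1)] by blast
  fix t :: real assume t: "t \<in> {0<..}"
  have "exp (-t - y/t) \<le> exp (-t)" using t assms by (auto simp: field_simps)
  hence "exp (-t - y/t) * t powr (a-1) \<le> exp (-t) * t powr (a-1)"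
    by (intro mult_right_mono) auto
  thus "norm (exp (-t - y/t) * t powr (a-1)) \<le> t powr (a-1) / exp t"
    by (simp add: exp_minus field_simps)
qed auto

lemma G_int2:
  fixes a y :: real assumes "a > -1" "y > 0"
  shows "(\<lambda>t. exp (-t - y/t) * t powr (a-1)) absolutely_integrable_on {0<..}"
proof (rule measurable_bounded_by_integrable_imp_absolutely_integrable[OF G_meas])
  show "(\<lambda>t. (1/y) * (t powr (a+1-1) / exp t)) integrable_on {0<..}"
    using Gamma_int'[of "a+1"] assms by (intro integrable_on_mult_right) auto
  fix t :: real assume t: "t \<in> {0<..}"
  have "y/t \<le> exp (y/t)" using exp_ge_add_one_self[of "y/t"] by linarith
  hence "exp (-(y/t)) \<le> t/y" using t assms by (simp add: exp_minus field_simps)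
  hence "exp (-t) * exp (-(y/t)) * t powr (a-1) \<le> exp (-t) * (t/y) * t powr (a-1)"
    by (intro mult_right_mono mult_left_mono) auto
  also have "\<dots> = (1/y) * (t powr (a+1-1) / exp t)"
    using t assms by (simp add: powr_add powr_diff exp_minus field_simps)
  finally show "norm (exp (-t - y/t) * t powr (a-1)) \<le> (1/y) * (t powr (a+1-1) / exp t)"
    by (simp add: exp_diff exp_minus field_simps)
qed auto

lemma G_has_int1:
  fixes a y :: real assumes "a > 0" "y \<ge> 0"
  shows "((\<lambda>t. exp (-t - y/t) * t powr (a-1)) has_integral G a y) {0<..}"
  using G_int1[OF assms] unfolding G_def absolutely_integrable_on_def by (auto intro: integrable_integral)

lemma G_has_int2:
  fixes a y :: real assumes "a > -1" "y > 0"
  shows "((\<lambda>t. exp (-t - y/t) * t powr (a-1)) has_integral G a y) {0<..}"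
  using G_int2[OF assms] unfolding G_def absolutely_integrable_on_def by (auto intro: integrable_integral)

lemma G_nonneg2:
  fixes a y :: real assumes "a > -1" "y > 0"
  shows "G a y \<ge> 0"
  by (rule has_integral_nonneg[OF G_has_int2[OF assms]]) auto

lemma G_nonneg1:
  fixes a y :: real assumes "a > 0" "y \<ge> 0"
  shows "G a y \<ge> 0"
  by (rule has_integral_nonneg[OF G_has_int1[OF assms]]) auto

lemma G_le_Gamma:
  fixes a y :: real assumes "a > 0" "y \<ge> 0"
  shows "G a y \<le> Gamma a"
proof (rule has_integral_le[OF G_has_int1[OF assms] Gamma_int'[OF assms(1)]])
  fix t :: real assume t: "t \<in> {0<..}"
  have "exp (-t - y/t) \<le> exp (-t)" using t assms by (auto simp: field_simps)
  hence "exp (-t - y/t) * t powr (a-1) \<le> exp (-t) * t powr (a-1)"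
    by (intro mult_right_mono) auto
  thus "exp (-t - y/t) * t powr (a-1) \<le> t powr (a-1) / exp t"
    by (simp add: exp_minus field_simps)
qed

lemma inner_FTC:
  fixes a x t :: real assumes "x > 0" "t > 0"
  shows "((\<lambda>s. exp (-t - s/t) * t powr (a-1-1)) has_integral
          (t powr (a-1) / exp t - exp (-t - x/t) * t powr (a-1))) {0<..<x}"
proof -
  define \<Phi> where "\<Phi> s = - t * exp (-t - s/t) * t powr (a-1-1)" for s
  have "((\<lambda>s. exp (-t - s/t) * t powr (a-1-1)) has_integral (\<Phi> x - \<Phi> 0)) {0..x}"
  proof (rule fundamental_theorem_of_calculus)
    fix s assume "s \<in> {0..x}"
    show "(\<Phi> has_vector_derivative exp (-t - s/t) * t powr (a-1-1)) (at s within {0..x})"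
      unfolding \<Phi>_def has_real_derivative_iff_has_vector_derivative[symmetric]
      using assms by (auto intro!: derivative_eq_intros simp: field_simps)
  qed (use assms in auto)
  moreover have "\<Phi> x - \<Phi> 0 = t powr (a-1) / exp t - exp (-t - x/t) * t powr (a-1)"
    using assms by (simp add: \<Phi>_def powr_diff exp_minus exp_diff field_simps power2_eq_square)
  ultimately show ?thesis
    by (metis has_integral_open_interval box_real(1) cbox_interval)
qed

lemma G_tonelli:
  fixes a x :: real assumes a: "a > 0" and x: "x > 0"
  shows "((\<lambda>s. G (a-1) s) has_integral (Gamma a - G a x)) {0<..<x}"
proof -
  define H where "H s t = ennreal (exp (-t - s/t) * t powr (a-1-1)) * indicator {0<..} t * indicator {0<..<x} s" for s t :: real
  have meas: "(\<lambda>(s,t). H s t) \<in> borel_measurable (lborel \<Otimes>\<^sub>M lborel)"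
    unfolding H_def by measurable
  have inner_t: "(\<integral>\<^sup>+t. ennreal (exp (-t - s/t) * t powr (a-1-1)) * indicator {0<..} t \<partial>lborel) = ennreal (G (a-1) s)"
    if s: "s > 0" for s
  proof -
    have "(\<lambda>t. exp (-t - s/t) * t powr (a-1-1)) absolutely_integrable_on {0<..}"
      using G_int2[of "a-1" s] a s by simp
    hence "((\<lambda>t. exp (-t - s/t) * t powr (a-1-1)) has_integral G (a-1) s) {0<..}"
      unfolding G_def absolutely_integrable_on_def by (auto intro: integrable_integral)
    from nn_integral_has_integral_lebesgue'[OF _ this] show ?thesis by auto
  qed
  have Hs: "(\<integral>\<^sup>+t. H s t \<partial>lborel) = ennreal (G (a-1) s) * indicator {0<..<x} s" for s
  proof -
    have "(\<integral>\<^sup>+t. H s t \<partial>lborel) = (\<integral>\<^sup>+t. ennreal (exp (-t - s/t) * t powr (a-1-1)) * indicator {0<..} t \<partial>lborel) * indicator {0<..<x} s"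
      unfolding H_def by (rule nn_integral_multc) measurable
    also have "\<dots> = ennreal (G (a-1) s) * indicator {0<..<x} s"
      using inner_t by (cases "s \<in> {0<..<x}") auto
    finally show ?thesis .
  qed
  have step2: "(\<integral>\<^sup>+s. ennreal (G (a-1) s) * indicator {0<..<x} s \<partial>lborel) =
      (\<integral>\<^sup>+s. (\<integral>\<^sup>+t. H s t \<partial>lborel) \<partial>lborel)"
    by (intro nn_integral_cong) (simp add: Hs)
  have step3: "(\<integral>\<^sup>+s. (\<integral>\<^sup>+t. H s t \<partial>lborel) \<partial>lborel) = (\<integral>\<^sup>+t. (\<integral>\<^sup>+s. H s t \<partial>lborel) \<partial>lborel)"
    using lborel_pair.Fubini'[OF meas] by simp
  have step4: "(\<integral>\<^sup>+s. H s t \<partial>lborel) =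
     ennreal (t powr (a-1) / exp t - exp (-t - x/t) * t powr (a-1)) * indicator {0<..} t" for t
  proof (cases "t > 0")
    case True
    have "(\<integral>\<^sup>+s. H s t \<partial>lborel) = (\<integral>\<^sup>+s. ennreal (exp (-t - s/t) * t powr (a-1-1)) * indicator {0<..<x} s \<partial>lborel)"
      unfolding H_def using True by (intro nn_integral_cong) simp
    also have "\<dots> = ennreal (t powr (a-1) / exp t - exp (-t - x/t) * t powr (a-1))"
      by (rule nn_integral_has_integral_lebesgue'[OF _ inner_FTC]) (use x True in auto)
    finally show ?thesis using True by simp
  next
    case False
    thus ?thesis unfolding H_def by simp
  qed
  have step5: "(\<integral>\<^sup>+t. ennreal (t powr (a-1) / exp t - exp (-t - x/t) * t powr (a-1)) * indicator {0<..} t \<partial>lborel)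
      = ennreal (Gamma a - G a x)"
  proof (rule nn_integral_has_integral_lebesgue')
    have "((\<lambda>t. exp (-t - x/t) * t powr (a-1)) has_integral G a x) {0<..}"
      using G_int1[of a x] a x unfolding G_def absolutely_integrable_on_def by (auto intro: integrable_integral)
    thus "((\<lambda>t. t powr (a-1) / exp t - exp (-t - x/t) * t powr (a-1)) has_integral (Gamma a - G a x)) {0<..}"
      by (intro has_integral_diff Gamma_int' a)
    fix t :: real assume t: "t \<in> {0<..}"
    have "exp (-t - x/t) \<le> exp (-t)" using t x by auto
    hence "exp (-t - x/t) * t powr (a-1) \<le> exp (-t) * t powr (a-1)" by (intro mult_right_mono) auto
    thus "0 \<le> t powr (a-1) / exp t - exp (-t - x/t) * t powr (a-1)" by (simp add: exp_minus field_simps)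
  qed
  have total: "(\<integral>\<^sup>+s. ennreal (G (a-1) s) * indicator {0<..<x} s \<partial>lborel) = ennreal (Gamma a - G a x)"
    using step2 step3 step4 step5 by simp
  define \<phi> where "\<phi> s = enn2real (\<integral>\<^sup>+t. H s t \<partial>lborel)" for s
  have Gnn: "G (a-1) s \<ge> 0" if "s > 0" for s
  proof -
    have "(\<lambda>t. exp (-t - s/t) * t powr (a-1-1)) absolutely_integrable_on {0<..}"
      using G_int2[of "a-1" s] a that by simp
    thus ?thesis unfolding G_def absolutely_integrable_on_def by (auto intro!: integral_nonneg)
  qed
  have phi_eq: "\<phi> s = G (a-1) s * indicator {0<..<x} s" for s
    unfolding \<phi>_def Hs using Gnn by (cases "s \<in> {0<..<x}") auto
  have phi_meas: "\<phi> \<in> borel_measurable borel"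
  proof -
    have "(\<lambda>s. \<integral>\<^sup>+t. H s t \<partial>lborel) \<in> borel_measurable lborel"
      using sigma_finite_measure.borel_measurable_nn_integral[OF sigma_finite_lborel meas] by simp
    hence "\<phi> \<in> borel_measurable lborel" unfolding \<phi>_def by measurable
    thus ?thesis by simp
  qed
  have "0 \<le> Gamma a - G a x" using G_le_Gamma[of a x] a x by simp
  have nnphi: "(\<integral>\<^sup>+s. ennreal (\<phi> s) \<partial>lborel) = ennreal (Gamma a - G a x)"
    unfolding phi_eq total[symmetric]
    by (intro nn_integral_cong) (auto simp: indicator_def)
  have phi_nn: "0 \<le> \<phi> s" for s using Gnn by (auto simp: phi_eq indicator_def)
  from nn_integral_has_integral[OF phi_meas phi_nn nnphi \<open>0 \<le> Gamma a - G a x\<close>]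
  have "(\<phi> has_integral (Gamma a - G a x)) UNIV" .
  hence "((\<lambda>s. if s \<in> {0<..<x} then G (a-1) s else 0) has_integral (Gamma a - G a x)) UNIV"
  proof -
    have "\<phi> = (\<lambda>s. if s \<in> {0<..<x} then G (a-1) s else 0)"
      by (auto simp: phi_eq indicator_def)
    with \<open>(\<phi> has_integral (Gamma a - G a x)) UNIV\<close> show ?thesis by simp
  qed
  thus ?thesis by (subst has_integral_restrict_UNIV[symmetric]) 
qed

lemma KG:
  fixes a x :: real assumes a: "\<bar>a\<bar> < 1" and x: "x > 0"
  shows "(\<lambda>s. exp (- x * cosh s) * cosh (a * s)) absolutely_integrable_on {0..}"
    and "integral {0..} (\<lambda>s. exp (- x * cosh s) * cosh (a * s)) = (1/2) * (x/2) powr (-a) * G a (x^2/4)"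
proof -
  define y where "y = x^2/4"
  have y: "y > 0" using x by (simp add: y_def)
  define F where "F t = exp (-t - y/t) * t powr (a-1)" for t :: real
  have Fint: "F absolutely_integrable_on {0<..}" unfolding F_def using G_int2[of a y] a y by auto
  define g1 where "g1 s = (x/2) * exp s" for s :: real
  define g2 where "g2 s = (x/2) * exp (-s)" for s :: real
  define Ec where "Ec s = exp (- x * cosh s)" for s :: real
  have img1: "g1 ` {0..} = {x/2..}"
  proof
    show "g1 ` {0..} \<subseteq> {x/2..}" using x by (auto simp: g1_def)
  next
    show "{x/2..} \<subseteq> g1 ` {0..}"
    proof
    fix t :: real assume t: "t \<in> {x/2..}"
    hence "t = g1 (ln (2*t/x))" "ln (2*t/x) \<in> {0..}" using x by (auto simp: g1_def)
    thus "t \<in> g1 ` {0..}" by blast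
    qed
  qed
  have img2: "g2 ` {0..} = {0<..x/2}"
  proof
    show "g2 ` {0..} \<subseteq> {0<..x/2}" using x by (auto simp: g2_def)
  next
    show "{0<..x/2} \<subseteq> g2 ` {0..}"
    proof
    fix t :: real assume t: "t \<in> {0<..x/2}"
    hence "t = g2 (ln (x/(2*t)))" "ln (x/(2*t)) \<in> {0..}" using x by (auto simp: g2_def exp_minus field_simps)
    thus "t \<in> g2 ` {0..}" by blast
    qed
  qed
  have pw1: "\<bar>g1 s\<bar> * F (g1 s) = (x/2) powr a * (exp (a * s) * Ec s)" for s
  proof -
    have "-g1 s - y / g1 s = - x * cosh s"
      using x by (simp add: g1_def y_def cosh_def exp_minus field_simps power2_eq_square)
    moreover have "\<bar>g1 s\<bar> * g1 s powr (a-1) = (x/2) powr a * exp (a * s)"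
    proof -
      have gp: "g1 s > 0" using x by (simp add: g1_def)
      hence "\<bar>g1 s\<bar> * g1 s powr (a-1) = g1 s powr a" by (simp add: powr_diff)
      also have "\<dots> = (x/2) powr a * exp (a * s)"
        using x unfolding g1_def by (subst powr_mult) (simp_all add: exp_powr_real mult.commute)
      finally show ?thesis .
    qed
    ultimately show ?thesis unfolding F_def Ec_def by (simp add: mult_ac)
  qed
  have pw2: "\<bar>- g2 s\<bar> * F (g2 s) = (x/2) powr a * (exp (-a * s) * Ec s)" for s
  proof -
    have "-g2 s - y / g2 s = - x * cosh s"
      using x by (simp add: g2_def y_def cosh_def exp_minus field_simps power2_eq_square)
    moreover have "\<bar>-g2 s\<bar> * g2 s powr (a-1) = (x/2) powr a * exp (-a * s)"
    proof -
      have gp: "g2 s > 0" using x by (simp add: g2_def)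
      hence "\<bar>-g2 s\<bar> * g2 s powr (a-1) = g2 s powr a" by (simp add: powr_diff)
      also have "\<dots> = (x/2) powr a * exp (-a * s)"
        using x unfolding g2_def by (subst powr_mult) (simp_all add: exp_powr_real mult.commute)
      finally show ?thesis .
    qed
    ultimately show ?thesis unfolding F_def Ec_def by (simp add: mult_ac)
  qed
  have sub1: "F absolutely_integrable_on {x/2..}"
    by (rule set_integrable_subset[OF Fint]) (use x in auto)
  have sub2: "F absolutely_integrable_on {0<..x/2}"
    by (rule set_integrable_subset[OF Fint]) auto
  have cv1: "(\<lambda>s. \<bar>g1 s\<bar> * F (g1 s)) absolutely_integrable_on {0..} \<and>
      integral {0..} (\<lambda>s. \<bar>g1 s\<bar> * F (g1 s)) = integral {x/2..} F"
  proof (subst has_absolute_integral_change_of_variables_1'[where g = g1])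
    show "(g1 has_field_derivative g1 s) (at s within {0..})" for s
      unfolding g1_def by (auto intro!: derivative_eq_intros)
    show "inj_on g1 {0..}" using x by (auto simp: inj_on_def g1_def)
  qed (use sub1 img1 in auto)
  have cv2: "(\<lambda>s. \<bar>- g2 s\<bar> * F (g2 s)) absolutely_integrable_on {0..} \<and>
      integral {0..} (\<lambda>s. \<bar>- g2 s\<bar> * F (g2 s)) = integral {0<..x/2} F"
  proof (subst has_absolute_integral_change_of_variables_1'[where g = g2])
    show "(g2 has_field_derivative - g2 s) (at s within {0..})" for s
      unfolding g2_def by (auto intro!: derivative_eq_intros)
    show "inj_on g2 {0..}" using x by (auto simp: inj_on_def g2_def)
  qed (use sub2 img2 in auto)
  define c where "c = (x/2) powr (-a) / 2"
  have eqfun: "Ec s * cosh (a * s) = c * (\<bar>g1 s\<bar> * F (g1 s)) + c * (\<bar>- g2 s\<bar> * F (g2 s))" for s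
    unfolding pw1 pw2 c_def using x
    by (simp add: cosh_def exp_minus powr_minus field_simps)
  have ai: "(\<lambda>s. c * (\<bar>g1 s\<bar> * F (g1 s)) + c * (\<bar>- g2 s\<bar> * F (g2 s))) absolutely_integrable_on {0..}"
    using cv1 cv2 by (intro set_integral_add(1) set_integrable_mult_right) auto
  thus "(\<lambda>s. exp (- x * cosh s) * cosh (a * s)) absolutely_integrable_on {0..}"
    using eqfun unfolding Ec_def by simp
  have "integral {0..} (\<lambda>s. exp (- x * cosh s) * cosh (a * s)) =
        integral {0..} (\<lambda>s. c * (\<bar>g1 s\<bar> * F (g1 s)) + c * (\<bar>- g2 s\<bar> * F (g2 s)))"
    using eqfun unfolding Ec_def by simp
  also have "\<dots> = c * integral {x/2..} F + c * integral {0<..x/2} F"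
    using cv1 cv2 unfolding absolutely_integrable_on_def
    by (subst integral_add) (auto intro: integrable_on_mult_right)
  also have "integral {x/2..} F + integral {0<..x/2} F = integral {0<..} F"
  proof -
    have "(F has_integral (integral {x/2..} F + integral {0<..x/2} F)) ({x/2..} \<union> {0<..x/2})"
      using sub1 sub2 unfolding absolutely_integrable_on_def
      by (intro has_integral_Un) (auto intro: negligible_subset[of "{x/2}"])
    moreover have "{x/2..} \<union> {0<..x/2} = {0<..}" using x by auto
    ultimately show ?thesis by (simp add: integral_unique)
  qed
  hence "c * integral {x/2..} F + c * integral {0<..x/2} F = c * integral {0<..} F"
    by (metis distrib_left)
  also have "integral {0<..} F = G a (x^2/4)"
    unfolding G_def by (intro integral_cong) (simp add: F_def y_def)
  finally show "integral {0..} (\<lambda>s. exp (- x * cosh s) * cosh (a * s)) = (1/2) * (x/2) powr (-a) * G a (x^2/4)"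
    by (simp add: c_def)
qed

lemma G_sym:
  fixes a y :: real assumes a: "\<bar>a\<bar> < 1" and y: "y > 0"
  shows "G a y = y powr a * G (-a) y"
proof -
  define x where "x = 2 * sqrt y"
  have x: "x > 0" and xy: "x^2/4 = y" using y by (auto simp: x_def power_mult_distrib)
  have "integral {0..} (\<lambda>s. exp (- x * cosh s) * cosh (a * s)) = integral {0..} (\<lambda>s. exp (- x * cosh s) * cosh ((-a) * s))"
    by simp
  hence "(1/2) * (x/2) powr (-a) * G a y = (1/2) * (x/2) powr (-(-a)) * G (-a) y"
    using KG(2)[of a x] KG(2)[of "-a" x] a x xy by simp
  hence "G a y = (x/2) powr (2*a) * G (-a) y"
    using x by (simp add: powr_minus field_simps powr_add[symmetric])
  also have "(x/2) powr (2*a) = y powr a"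
    using y by (simp add: x_def powr_half_sqrt[symmetric] powr_powr)
  finally show ?thesis .
qed

lemma one_minus_exp_le:
  fixes z b :: real assumes "z \<ge> 0" "0 < b" "b \<le> 1"
  shows "1 - exp (-z) \<le> z powr b"
  by (smt (verit, ccfv_SIG) assms(1,2,3) ge_one_powr_ge_zero ln_exp
    ln_le_minus_one not_exp_le_zero powr_mono' powr_one_gt_zero_iff)

lemma G_near:
  fixes a y :: real assumes a: "0 < a" "a \<le> 2" and y: "y \<ge> 0"
  shows "Gamma a - G a y \<le> y powr (a/2) * Gamma (a/2)"
proof (rule has_integral_le)
  show "((\<lambda>t. t powr (a-1) / exp t - exp (-t - y/t) * t powr (a-1)) has_integral (Gamma a - G a y)) {0<..}"
    by (intro has_integral_diff Gamma_int' G_has_int1 a y)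
  show "((\<lambda>t. y powr (a/2) * (t powr (a/2-1) / exp t)) has_integral (y powr (a/2) * Gamma (a/2))) {0<..}"
    by (intro has_integral_mult_right Gamma_int') (use a in auto)
  fix t :: real assume t: "t \<in> {0<..}"
  have "1 - exp (-(y/t)) \<le> (y/t) powr (a/2)"
    by (rule one_minus_exp_le) (use a y t in auto)
  hence "t powr (a-1) * exp (-t) * (1 - exp (-(y/t))) \<le> t powr (a-1) * exp (-t) * ((y/t) powr (a/2))"
    by (intro mult_left_mono) auto
  also have "\<dots> = y powr (a/2) * (t powr (a/2-1) / exp t)"
  proof -
    have "t powr (a-1) = t powr (a/2-1) * t powr (a/2)" by (simp add: powr_add[symmetric])
    thus ?thesis using t y by (simp add: powr_divide exp_minus field_simps)
  qed
  finally show "t powr (a-1) / exp t - exp (-t - y/t) * t powr (a-1) \<le> y powr (a/2) * (t powr (a/2-1) / exp t)"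
    by (simp add: exp_diff exp_minus field_simps)
qed

lemma G_lim0:
  fixes a :: real assumes a: "0 < a" "a \<le> 2"
  shows "((\<lambda>y. G a y) \<longlongrightarrow> Gamma a) (at_right 0)"
proof -
  have p0: "((\<lambda>y::real. y powr (a/2)) \<longlongrightarrow> 0) (at_right 0)" using a by real_asymp
  have "((\<lambda>y. Gamma a - y powr (a/2) * Gamma (a/2)) \<longlongrightarrow> Gamma a - 0 * Gamma (a/2)) (at_right 0)"
    by (intro tendsto_intros p0)
  hence l: "((\<lambda>y. Gamma a - y powr (a/2) * Gamma (a/2)) \<longlongrightarrow> Gamma a) (at_right 0)" by simp
  show ?thesis
  proof (rule tendsto_sandwich[OF _ _ l tendsto_const])
    show "\<forall>\<^sub>F y in at_right 0. Gamma a - y powr (a/2) * Gamma (a/2) \<le> G a y"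
      using eventually_at_right_less[of "0::real"]
    proof eventually_elim
      case (elim y) thus ?case using G_near[OF a, of y] by simp
    qed
    show "\<forall>\<^sub>F y in at_right 0. G a y \<le> Gamma a"
      using eventually_at_right_less[of "0::real"]
    proof eventually_elim
      case (elim y) thus ?case using G_le_Gamma[of a y] a by simp
    qed
  qed
qed

lemma int_littleo:
  fixes g h p I H P :: "real \<Rightarrow> real" and d :: real
  assumes d: "d > 0"
    and gI: "\<And>x. 0 < x \<Longrightarrow> x < d \<Longrightarrow> (g has_integral I x) {0<..<x}"
    and hI: "\<And>x. 0 < x \<Longrightarrow> x < d \<Longrightarrow> (h has_integral H x) {0<..<x}"
    and pI: "\<And>x. 0 < x \<Longrightarrow> x < d \<Longrightarrow> (p has_integral P x) {0<..<x}"
    and pP: "\<And>x. 0 < x \<Longrightarrow> P x > 0"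
    and pp: "\<And>s. 0 < s \<Longrightarrow> p s > 0"
    and lim: "((\<lambda>s. (g s - h s) / p s) \<longlongrightarrow> 0) (at_right 0)"
  shows "((\<lambda>x. (I x - H x) / P x) \<longlongrightarrow> 0) (at_right 0)"
proof (rule tendstoI)
  fix e :: real assume e: "e > 0"
  from tendstoD[OF lim, of "e/2"] e
  have "\<forall>\<^sub>F s in at_right 0. \<bar>(g s - h s)/p s\<bar> < e/2" by (simp add: dist_real_def)
  then obtain b where b: "b > 0" "\<And>s. 0 < s \<Longrightarrow> s < b \<Longrightarrow> \<bar>(g s - h s)/p s\<bar> < e/2"
    by (auto simp: eventually_at_right_field)
  show "\<forall>\<^sub>F x in at_right 0. dist ((I x - H x)/P x) 0 < e"
    unfolding eventually_at_right_field
  proof (intro exI[of _ "min b d"] conjI allI impI)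
    show "0 < min b d" using b d by simp
    fix x :: real assume x: "0 < x" "x < min b d"
    have bnd: "\<bar>g s - h s\<bar> \<le> e/2 * p s" if "s \<in> {0<..<x}" for s
    proof -
      have "\<bar>g s - h s\<bar> / p s < e/2" using b(2)[of s] pp[of s] that x by (simp add: abs_divide)
      thus ?thesis using pp[of s] that by (simp add: pos_divide_less_eq)
    qed
    have bnd2: "g s - h s \<le> e/2 * p s \<and> -(e/2 * p s) \<le> g s - h s" if "s \<in> {0<..<x}" for s
      using bnd[OF that] by linarith
    have i1: "((\<lambda>s. g s - h s) has_integral (I x - H x)) {0<..<x}"
      using gI hI x by (intro has_integral_diff) auto
    have i2: "((\<lambda>s. e/2 * p s) has_integral (e/2 * P x)) {0<..<x}"
      using pI x by (intro has_integral_mult_right) auto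
    have "I x - H x \<le> e/2 * P x"
      by (rule has_integral_le[OF i1 i2]) (use bnd2 in force)
    moreover have "-(e/2 * P x) \<le> I x - H x"
      by (rule has_integral_le[OF has_integral_neg[OF i2] i1]) (use bnd2 in force)
    ultimately have "\<bar>I x - H x\<bar> \<le> e/2 * P x" by linarith
    hence A: "\<bar>I x - H x\<bar> / P x \<le> e/2" using pP[of x] x by (simp add: pos_divide_le_eq)
    have "\<bar>(I x - H x) / P x\<bar> = \<bar>I x - H x\<bar> / P x" using pP[of x] x by (simp add: abs_divide)
    hence "\<bar>(I x - H x) / P x\<bar> < e" using A e by linarith
    thus "dist ((I x - H x)/P x) 0 < e" by (simp add: dist_real_def)
  qed
qed

lemma powr_int0:
  fixes b x :: real assumes "b > -1" "x > 0"
  shows "((\<lambda>s. s powr b) has_integral (x powr (b+1) / (b+1))) {0<..<x}"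
proof -
  have "((\<lambda>s. s powr b) has_integral (x powr (b+1) / (b+1))) {0..x}"
    using has_integral_powr_from_0[of b x] assms by simp
  thus ?thesis by (metis has_integral_open_interval box_real(1) cbox_interval)
qed

lemma const_int0:
  fixes c x :: real assumes "x > 0"
  shows "((\<lambda>s. c) has_integral (c * x)) {0<..<x}"
proof -
  have "((\<lambda>s. c) has_integral (c * x)) {0..x}"
    using has_integral_const_real[of c 0 x] assms by (simp add: mult.commute)
  thus ?thesis by (metis has_integral_open_interval box_real(1) cbox_interval)
qed

lemma algB:
  fixes q k A B C :: real assumes "q > 0" "k > 0"
  shows "-(1/k) * (((A - B) - C * (q/k)) / (q/k)) = ((1/q) * B - (A * (1/q) - C/k))/1"
  using assms by (simp add: field_simps)

lemma stepA:
  fixes m :: real assumes m: "0 < m" "m < 1"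
  shows "((\<lambda>s. ((Gamma (1-m) - G (1-m) s) - Gamma m * (s powr (1-m) / (1-m))) / (s powr (1-m) / (1-m))) \<longlongrightarrow> 0) (at_right 0)"
proof (rule int_littleo[where d=1 and g = "G (-m)" and h = "\<lambda>r. Gamma m * r powr (-m)" and p = "\<lambda>r. r powr (-m)"])
  fix x :: real assume x: "0 < x" "x < 1"
  show "(G (-m) has_integral (Gamma (1-m) - G (1-m) x)) {0<..<x}"
    using G_tonelli[of "1-m" x] m x by simp
  show "((\<lambda>r. Gamma m * r powr (-m)) has_integral (Gamma m * (x powr (1-m) / (1-m)))) {0<..<x}"
    using powr_int0[of "-m" x] m x by (intro has_integral_mult_right) simp
  show "((\<lambda>r. r powr (-m)) has_integral (x powr (1-m) / (1-m))) {0<..<x}"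
    using powr_int0[of "-m" x] m x by simp
next
  have "((\<lambda>r. G m r - Gamma m) \<longlongrightarrow> Gamma m - Gamma m) (at_right 0)"
    using G_lim0[of m] m by (intro tendsto_intros) auto
  hence l: "((\<lambda>r. G m r - Gamma m) \<longlongrightarrow> 0) (at_right 0)" by simp
  show "((\<lambda>s. (G (-m) s - Gamma m * s powr (-m)) / s powr (-m)) \<longlongrightarrow> 0) (at_right 0)"
  proof (rule Lim_transform_eventually[OF l])
    show "\<forall>\<^sub>F r in at_right 0. G m r - Gamma m = (G (-m) r - Gamma m * r powr (-m)) / r powr (-m)"
      using eventually_at_right_less[of "0::real"]
    proof eventually_elim
      case (elim r)
      have "G m r = r powr m * G (-m) r" using G_sym[of m r] m elim by simp
      moreover have "r powr (-m) = 1 / r powr m" by (simp add: powr_minus_divide)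
      moreover have "r powr m > 0" using elim by simp
      ultimately show ?case by (simp add: field_simps)
    qed
  qed
qed (use m in auto)

lemma stepB:
  fixes m :: real assumes m: "0 < m" "m < 1"
  shows "((\<lambda>x. ((Gamma m - G m x) - (Gamma (1-m) * (x powr m / m) - Gamma m / (1-m) * x)) / x) \<longlongrightarrow> 0) (at_right 0)"
proof (rule int_littleo[where d=1 and g = "G (m-1)" and h = "\<lambda>s. Gamma (1-m) * s powr (m-1) - Gamma m / (1-m)" and p = "\<lambda>r. 1"])
  fix x :: real assume x: "0 < x" "x < 1"
  show "(G (m-1) has_integral (Gamma m - G m x)) {0<..<x}"
    using G_tonelli[of m x] m x by simp
  show "((\<lambda>s. Gamma (1-m) * s powr (m-1) - Gamma m / (1-m)) has_integral (Gamma (1-m) * (x powr m / m) - Gamma m / (1-m) * x)) {0<..<x}"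
    using powr_int0[of "m-1" x] m x by (intro has_integral_diff has_integral_mult_right const_int0) simp_all
  show "((\<lambda>r. 1) has_integral x) {0<..<x}"
    using const_int0[of x 1] x by simp
next
  have "((\<lambda>s. -(1/(1-m)) * (((Gamma (1-m) - G (1-m) s) - Gamma m * (s powr (1-m) / (1-m))) / (s powr (1-m) / (1-m)))) \<longlongrightarrow> -(1/(1-m)) * 0) (at_right 0)"
    by (intro tendsto_intros stepA m)
  hence l: "((\<lambda>s. -(1/(1-m)) * (((Gamma (1-m) - G (1-m) s) - Gamma m * (s powr (1-m) / (1-m))) / (s powr (1-m) / (1-m)))) \<longlongrightarrow> 0) (at_right 0)"
    by simp
  show "((\<lambda>s. (G (m-1) s - (Gamma (1-m) * s powr (m-1) - Gamma m / (1-m))) / 1) \<longlongrightarrow> 0) (at_right 0)"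
  proof (rule Lim_transform_eventually[OF l])
    show "\<forall>\<^sub>F s in at_right 0. -(1/(1-m)) * (((Gamma (1-m) - G (1-m) s) - Gamma m * (s powr (1-m) / (1-m))) / (s powr (1-m) / (1-m)))
       = (G (m-1) s - (Gamma (1-m) * s powr (m-1) - Gamma m / (1-m))) / 1"
      using eventually_at_right_less[of "0::real"]
    proof eventually_elim
      case (elim s)
      have GS: "G (m-1) s = s powr (m-1) * G (1-m) s" using G_sym[of "m-1" s] m elim by simp
      have pp: "s powr (m-1) * s powr (1-m) = 1" using elim by (simp add: powr_add[symmetric])
      have pos: "s powr (1-m) > 0" using elim by simp
      have inv: "s powr (m-1) = 1 / s powr (1-m)"
        using powr_minus_divide[of s "1-m"] by simp
      show ?case unfolding GS inv using algB[OF pos, of "1-m"] m by simp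
    qed
  qed
qed (use m in auto)

lemma cosh_ge: "1 + x^2/2 \<le> cosh (x::real)"
proof -
  have "(\<Sum>n\<in>{0,1,2}. (if even n then x ^ n /\<^sub>R fact n else 0)) \<le> (\<Sum>n. if even n then x ^ n /\<^sub>R fact n else 0)"
    by (rule sum_le_suminf) (use cosh_converges[of x] in \<open>auto simp: sums_iff zero_le_even_power\<close>)
  thus ?thesis using cosh_converges[of x] by (simp add: sums_iff eval_nat_numeral)
qed

lemma cosh_le_exp_abs: "cosh (y::real) \<le> exp \<bar>y\<bar>"
proof -
  have A: "exp (-y) \<le> exp \<bar>y\<bar>" "exp y \<le> exp \<bar>y\<bar>" by simp_all
  show ?thesis unfolding cosh_field_def using add_mono[OF A(2) A(1)] by simp
qed

definition phi :: "real \<Rightarrow> real \<Rightarrow> real \<Rightarrow> real" where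
  "phi a x v = exp (- x * (cosh (sqrt (2/x) * v) - 1)) * cosh (a * (sqrt (2/x) * v))"

lemma phi_bound:
  fixes a x v :: real assumes a: "\<bar>a\<bar> \<le> 1" and x: "x \<ge> 1" and v: "v \<ge> 0"
  shows "\<bar>phi a x v\<bar> \<le> exp 2 * exp (- v)"
proof -
  define c where "c = sqrt (2/x)"
  have "2/x \<le> 2" using x by (auto simp: field_simps)
  hence c: "c > 0" "c^2 = 2/x" "c \<le> sqrt 2" using x by (auto simp: c_def)
  have "x * (c * v)^2/2 \<le> x * (cosh (c * v) - 1)" using cosh_ge[of "c * v"] x by (simp add: mult_left_mono)
  moreover have "x * (c * v)^2/2 = v^2" using c x by (simp add: power_mult_distrib)
  ultimately have e1: "exp (- x * (cosh (c * v) - 1)) \<le> exp (- (v^2))" by simp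
  have "\<bar>a * (c * v)\<bar> \<le> c * v" using a c v by (simp add: abs_mult mult_left_le_one_le)
  also have "\<dots> \<le> sqrt 2 * v" using c v by (simp add: mult_right_mono)
  finally have e2: "cosh (a * (c * v)) \<le> exp (sqrt 2 * v)"
    using cosh_le_exp_abs[of "a*(c * v)"] by (meson exp_le_cancel_iff order_trans)
  have s2: "sqrt 2 \<le> (3/2::real)" by (rule real_le_lsqrt) (auto simp: power2_eq_square)
  have "- (v^2) + sqrt 2 * v \<le> 2 - v"
  proof -
    have "sqrt 2 * v \<le> 3/2 * v" using mult_right_mono[OF s2 v] by simp
    moreover have "0 \<le> (v - 5/4)^2" by simp
    ultimately show ?thesis by (simp add: power2_eq_square algebra_simps) 
  qed
  hence e3: "exp (- (v^2)) * exp (sqrt 2 * v) \<le> exp 2 * exp (-v)"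
    by (simp add: exp_add[symmetric])
  have "phi a x v = exp (- x * (cosh (c * v) - 1)) * cosh (a * (c * v))" by (simp add: phi_def c_def)
  also have "\<dots> \<le> exp (- (v^2)) * exp (sqrt 2 * v)"
    by (intro mult_mono e1 e2) auto
  finally show ?thesis using e3 by (simp add: phi_def)
qed

lemma phi_lim:
  fixes a v :: real assumes v: "v \<ge> 0"
  shows "((\<lambda>x. phi a x v) \<longlongrightarrow> exp (- (v^2))) at_top"
proof (cases "v = 0")
  case True thus ?thesis by (simp add: phi_def)
next
  case False
  hence v: "v > 0" using v by simp
  have l0: "((\<lambda>x. x * (cosh (sqrt 2 / sqrt x * v) - 1)) \<longlongrightarrow> v * (v * (root 2 2 * root 2 2)) / 2) at_top"
    using v unfolding cosh_field_def by real_asymp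
  have "v * (v * (root 2 2 * root 2 2)) / 2 = v^2"
    by (simp add: sqrt_def[symmetric] power2_eq_square)
  hence l1: "((\<lambda>x. x * (cosh (sqrt (2/x) * v) - 1)) \<longlongrightarrow> v^2) at_top"
    using l0 by (simp add: real_sqrt_divide)
  have l2: "((\<lambda>x::real. sqrt (2/x)) \<longlongrightarrow> 0) at_top" by real_asymp
  have "((\<lambda>x. exp (- (x * (cosh (sqrt (2/x) * v) - 1))) * cosh (a * (sqrt (2/x) * v))) \<longlongrightarrow> exp (- (v^2)) * cosh (a * (0 * v))) at_top"
    by (intro tendsto_intros l1 l2)
  thus ?thesis by (simp add: phi_def)
qed

lemma K_phi:
  fixes a x :: real assumes a: "\<bar>a\<bar> < 1" and x: "x > 0"
  shows "(\<lambda>v. phi a x v) integrable_on {0..}"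
    and "sqrt x * exp x * integral {0..} (\<lambda>s. exp (- x * cosh s) * cosh (a * s)) = sqrt 2 * integral {0..} (\<lambda>v. phi a x v)"
proof -
  define h where "h s = exp x * (exp (- x * cosh s) * cosh (a * s))" for s
  have habs: "h absolutely_integrable_on {0..}"
    unfolding h_def using KG(1)[OF a x] by (intro set_integrable_mult_right)
  define c where "c = sqrt (2/x)"
  have c: "c > 0" using x by (simp add: c_def)
  have img: "(\<lambda>v. c * v) ` {0..} = {0..}"
  proof
    show "(\<lambda>v. c * v) ` {0..} \<subseteq> {0..}" using c by auto
    show "{0..} \<subseteq> (\<lambda>v. c * v) ` {0..}"
    proof
      fix t :: real assume "t \<in> {0..}"
      hence "t = c * (t / c)" "t / c \<in> {0..}" using c by auto
      thus "t \<in> (\<lambda>v. c * v) ` {0..}" by blast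
    qed
  qed
  have cv: "(\<lambda>v. \<bar>c\<bar> * h (c * v)) absolutely_integrable_on {0..} \<and>
      integral {0..} (\<lambda>v. \<bar>c\<bar> * h (c * v)) = integral {0..} h"
  proof (subst has_absolute_integral_change_of_variables_1'[where g = "\<lambda>v. c * v"])
    show "((\<lambda>v. c * v) has_field_derivative c) (at v within {0..})" for v
      by (auto intro!: derivative_eq_intros)
    show "inj_on (\<lambda>v. c * v) {0..}" using c by (auto simp: inj_on_def)
  qed (use habs img in auto)
  have pw: "h (c * v) = phi a x v" for v
    unfolding h_def phi_def c_def by (simp add: exp_add[symmetric] algebra_simps)
  have "(\<lambda>v. c * phi a x v) integrable_on {0..}"
    using cv c unfolding pw absolutely_integrable_on_def by simp
  thus "(\<lambda>v. phi a x v) integrable_on {0..}" using c by simp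
  have "exp x * integral {0..} (\<lambda>s. exp (- x * cosh s) * cosh (a * s)) = integral {0..} h"
    unfolding h_def by simp
  also have "\<dots> = c * integral {0..} (\<lambda>v. phi a x v)"
    using cv c unfolding pw by simp
  finally have E: "exp x * integral {0..} (\<lambda>s. exp (- x * cosh s) * cosh (a * s)) = c * integral {0..} (\<lambda>v. phi a x v)" .
  have sc: "sqrt x * c = sqrt 2" using x by (simp add: c_def real_sqrt_divide)
  have "sqrt x * exp x * integral {0..} (\<lambda>s. exp (- x * cosh s) * cosh (a * s)) =
        sqrt x * (exp x * integral {0..} (\<lambda>s. exp (- x * cosh s) * cosh (a * s)))" by (simp only: mult.assoc)
  also have "\<dots> = (sqrt x * c) * integral {0..} (\<lambda>v. phi a x v)" by (simp only: E mult.assoc)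
  finally show "sqrt x * exp x * integral {0..} (\<lambda>s. exp (- x * cosh s) * cosh (a * s)) = sqrt 2 * integral {0..} (\<lambda>v. phi a x v)"
    by (simp only: sc)
qed

lemma gauss_half: "integral {0..} (\<lambda>v::real. exp (- (v^2))) = sqrt pi / 2"
proof -
  have hb: "has_bochner_integral lborel (\<lambda>x. indicator {0..} x *\<^sub>R exp (- x\<^sup>2)) (sqrt pi / 2)"
    by (rule gaussian_moment_0)
  hence si: "set_integrable lborel {0..} (\<lambda>x::real. exp (- x\<^sup>2))"
    unfolding set_integrable_def using has_bochner_integral_iff by blast
  have "(LINT x:{0..}|lborel. exp (- x\<^sup>2)) = sqrt pi / 2"
    unfolding set_lebesgue_integral_def using hb by (rule has_bochner_integral_integral_eq)
  thus ?thesis using set_borel_integral_eq_integral(2)[OF si] by simp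
qed

lemma J_lim:
  fixes a :: real assumes a: "\<bar>a\<bar> < 1"
  shows "((\<lambda>x. integral {0..} (\<lambda>v. phi a x v)) \<longlongrightarrow> sqrt pi / 2) at_top"
proof (rule tendsto_at_topI_sequentially)
  fix X :: "nat \<Rightarrow> real" assume X: "filterlim X at_top sequentially"
  define Y where "Y n = max 1 (X n)" for n
  have Y: "filterlim Y at_top sequentially"
    by (rule filterlim_at_top_mono[OF X]) (auto simp: Y_def)
  have Y1: "Y n \<ge> 1" for n by (simp add: Y_def)
  have dc: "(\<lambda>n. integral {0..} (\<lambda>v. phi a (Y n) v)) \<longlonglongrightarrow> integral {0..} (\<lambda>v. exp (- (v^2)))"
  proof (rule dominated_convergence(2)[where h = "\<lambda>v. exp (2::real) * exp (- 1 * v)"])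
    show "(\<lambda>v. phi a (Y n) v) integrable_on {0..}" for n
      using K_phi(1)[OF a, of "Y n"] Y1[of n] by simp
    show "(\<lambda>v. exp (2::real) * exp (- 1 * v)) integrable_on {0..}"
    proof -
      have "(\<lambda>v::real. exp (- 1 * v)) integrable_on {0::real..}"
        by (rule integrable_on_exp_minus_to_infinity) simp
      thus ?thesis by (rule integrable_on_mult_right)
    qed
    show "norm (phi a (Y n) v) \<le> exp (2::real) * exp (- 1 * v)" if "v \<in> {0..}" for n v
      using phi_bound[of a "Y n" v] a Y1[of n] that by simp
    show "(\<lambda>n. phi a (Y n) v) \<longlonglongrightarrow> exp (- (v^2))" if "v \<in> {0..}" for v
      using filterlim_compose[OF phi_lim[of v a] Y] that by simp
  qed
  have ev: "\<forall>\<^sub>F n in sequentially. integral {0..} (\<lambda>v. phi a (Y n) v) = integral {0..} (\<lambda>v. phi a (X n) v)"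
  proof -
    have "\<forall>\<^sub>F n in sequentially. 1 \<le> X n" using X by (simp add: filterlim_at_top)
    thus ?thesis by eventually_elim (simp add: Y_def)
  qed
  show "(\<lambda>n. integral {0..} (\<lambda>v. phi a (X n) v)) \<longlonglongrightarrow> sqrt pi / 2"
    using Lim_transform_eventually[OF dc ev] gauss_half by simp
qed

lemma K_asymp:
  fixes a :: real assumes a: "\<bar>a\<bar> < 1"
  shows "((\<lambda>x. sqrt x * exp x * integral {0..} (\<lambda>s. exp (- x * cosh s) * cosh (a * s))) \<longlongrightarrow> sqrt pi / sqrt 2) at_top"
proof -
  have "sqrt 2 * (sqrt pi / 2) = sqrt pi / sqrt 2"
    by (simp add: field_simps)
  moreover have "((\<lambda>x. sqrt 2 * integral {0..} (\<lambda>v. phi a x v)) \<longlongrightarrow> sqrt 2 * (sqrt pi / 2)) at_top"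
    by (intro tendsto_intros J_lim a)
  ultimately have l: "((\<lambda>x. sqrt 2 * integral {0..} (\<lambda>v. phi a x v)) \<longlongrightarrow> sqrt pi / sqrt 2) at_top"
    by simp
  have ev: "\<forall>\<^sub>F x in at_top. sqrt 2 * integral {0..} (\<lambda>v. phi a x v) = sqrt x * exp x * integral {0..} (\<lambda>s. exp (- x * cosh s) * cosh (a * s))"
    using eventually_gt_at_top[of "0::real"] by eventually_elim (use K_phi(2)[OF a] in simp)
  show ?thesis by (rule Lim_transform_eventually[OF l ev])
qed

lemma Gamma_reflection_real:
  fixes m :: real assumes "0 < m" "m < 1"
  shows "Gamma m * Gamma (1 - m) = pi / sin (pi * m)"
proof -
  have "Gamma (complex_of_real m) * Gamma (1 - complex_of_real m) = of_real pi / sin (of_real pi * of_real m)"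
    by (rule Gamma_reflection_complex)
  also have "Gamma (complex_of_real m) * Gamma (1 - complex_of_real m) = of_real (Gamma m * Gamma (1 - m))"
    by (simp add: Gamma_complex_of_real[symmetric])
  also have "of_real pi / sin (of_real pi * of_real m) = complex_of_real (pi / sin (pi * m))"
    by (simp add: sin_of_real[symmetric])
  finally show ?thesis by (simp only: of_real_eq_iff)
qed

lemma Gamma_dup_real:
  fixes z :: real assumes "0 < z"
  shows "Gamma z * Gamma (z + 1/2) = exp ((1 - 2*z) * ln 2) * sqrt pi * Gamma (2*z)"
proof -
  have nz: "complex_of_real z \<notin> \<int>\<^sub>\<le>\<^sub>0" "complex_of_real z + 1/2 \<notin> \<int>\<^sub>\<le>\<^sub>0"
    using assms by (auto elim!: nonpos_Ints_cases simp: complex_eq_iff)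
  have "Gamma (complex_of_real z) * Gamma (complex_of_real z + 1/2) =
        exp ((1 - 2 * complex_of_real z) * of_real (ln 2)) * of_real (sqrt pi) * Gamma (2 * complex_of_real z)"
    by (rule Gamma_legendre_duplication[OF nz])
  also have "Gamma (complex_of_real z) * Gamma (complex_of_real z + 1/2) = of_real (Gamma z * Gamma (z + 1/2))"
    by (simp add: Gamma_complex_of_real[symmetric])
  also have "exp ((1 - 2 * complex_of_real z) * of_real (ln 2)) * of_real (sqrt pi) * Gamma (2 * complex_of_real z)
      = of_real (exp ((1 - 2*z) * ln 2) * sqrt pi * Gamma (2*z))"
    by (simp add: Gamma_complex_of_real[symmetric] exp_of_real[symmetric])
  finally show ?thesis by (simp only: of_real_eq_iff)
qed

lemma const_id:
  fixes k :: real assumes k: "0 < k" "k < 1"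
  shows "c1 k * 2 powr ((1-k)/2 - 1) * Gamma ((1-k)/2) = c2 k"
proof -
  define m where "m = (1-k)/2"
  have m: "0 < m" "m < 1" using k by (auto simp: m_def)
  have refl: "Gamma m * Gamma (1 - m) = pi / cos (k * pi / 2)"
  proof -
    have "sin (pi * m) = cos (k * pi / 2)" unfolding m_def
      by (simp add: sin_cos_eq algebra_simps diff_divide_distrib)
    thus ?thesis using Gamma_reflection_real[OF m] by simp
  qed
  have dup: "Gamma (k/2) * Gamma (k/2 + 1/2) = 2 powr (1-k) * sqrt pi * Gamma k"
    using Gamma_dup_real[of "k/2"] k by (simp add: powr_def)
  have om: "1 - m = k/2 + 1/2" by (simp add: m_def field_simps)
  have cpos: "cos (k * pi / 2) > 0"
  proof (rule cos_gt_zero_pi)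
    have "0 < k * pi / 2" using k by simp
    moreover have "- (pi/2) < 0" using pi_gt_zero by simp
    ultimately show "- (pi/2) < k * pi / 2" by linarith
    have "pi * k < pi" using k by simp
    thus "k * pi / 2 < pi/2" by (simp add: field_simps)
  qed
  have g1: "Gamma (k/2) > 0" "Gamma k > 0" "Gamma m > 0" "Gamma (1-m) > 0" using k m by auto
  have p2: "2 powr m * 2 powr (m-1) = 2 powr (1-k) / 2"
    by (simp add: powr_add[symmetric] m_def powr_diff)
  have "c1 k * 2 powr (m - 1) * Gamma m = 2 powr m * 2 powr (m-1) * Gamma m / (sqrt pi * Gamma (k/2))"
    by (simp add: c1_def m_def)
  also have "\<dots> = 2 powr (1-k) * Gamma m / (2 * sqrt pi * Gamma (k/2))" by (simp add: p2)
  also have "\<dots> = c2 k"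
  proof -
    have "Gamma m * (2 powr (1-k) * sqrt pi * Gamma k) = Gamma m * Gamma (1-m) * Gamma (k/2)"
      using dup om by (simp add: mult_ac)
    also have "\<dots> = pi / cos (k * pi / 2) * Gamma (k/2)" by (simp add: refl)
    finally have E: "Gamma m * (2 powr (1-k) * sqrt pi * Gamma k) = pi / cos (k * pi / 2) * Gamma (k/2)" .
    have spi: "sqrt pi * sqrt pi = pi" by simp
    have E2: "sqrt pi * (Gamma k * (Gamma m * (2 powr (1-k) * cos (k * pi / 2)))) = sqrt pi * (sqrt pi * Gamma (k/2))"
      using E spi g1 cpos by (simp add: field_simps)
    hence E3: "Gamma k * (Gamma m * (2 powr (1-k) * cos (k * pi / 2))) = sqrt pi * Gamma (k/2)"
      by (subst (asm) mult_left_cancel) auto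
    show ?thesis unfolding c2_def using E3 g1 cpos
      by (simp add: field_simps)
  qed
  finally show ?thesis by (simp add: m_def)
qed

lemma P1_pow: fixes u m :: real assumes "u > 0"
  shows "(u/2) powr m * u powr (-m) / (u^2/4) powr m = 2 powr m / u powr (2*m)"
proof -
  have e: "(u^2/4) = (u/2) powr 2" using assms by (simp add: powr_numeral power_divide)
  have "(u^2/4) powr m = ((u/2) powr 2) powr m" by (simp only: e)
  also have "\<dots> = (u/2) powr (2*m)" by (simp only: powr_powr)
  finally have "(u^2/4) powr m = (u/2) powr (2*m)" .
  moreover have "(u/2) powr (2*m) = (u powr m * u powr m) / (2 powr m * 2 powr m)"
    using assms by (simp only: powr_divide mult_2 powr_add times_divide_times_eq)
  moreover have "(u/2) powr m = u powr m / 2 powr m" using assms by (simp only: powr_divide)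
  moreover have "u powr (-m) = 1 / u powr m" by (simp add: powr_minus_divide)
  moreover have "u powr (2*m) = u powr m * u powr m" by (simp only: mult_2 powr_add)
  moreover have "(a/b) * (1/a) / ((a*a)/(b*b)) = b/(a*a)" if "a > 0" "b > 0" for a b :: real
    using that by (simp add: field_simps)
  ultimately show ?thesis using assms by simp
qed

lemma P2_pow: fixes u k :: real assumes "u > 0"
  shows "(u^2/4) powr ((1-k)/2) = u powr (1-k) / 2 powr (1-k)"
proof -
  have e: "(u^2/4) = (u/2) powr 2" using assms by (simp add: powr_numeral power_divide)
  have "(u^2/4) powr ((1-k)/2) = ((u/2) powr 2) powr ((1-k)/2)" by (simp only: e)
  also have "\<dots> = (u/2) powr (2 * ((1-k)/2))" by (simp only: powr_powr)
  also have "2 * ((1-k)/2) = 1 - k" by simp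
  finally have "(u^2/4) powr ((1-k)/2) = (u/2) powr (1-k)" .
  thus ?thesis using assms by (simp add: powr_divide)
qed

lemma alg_pt:
  fixes c1 c2 T Gam Gm Gn Y a b P :: real
  assumes "Gm = Y * Gn" "a * b / Y = T / P" "c2 = c1 * (T/2) * Gam" "Gam > 0" "Y > 0" "P > 0"
  shows "c1 * ((1/2) * a * Gn * b) = c2 * (Gm / Gam / P)"
proof -
  have "a * b = T / P * Y" using assms(2,5) by (simp add: field_simps)
  thus ?thesis using assms by (simp add: field_simps)
qed

lemma pt:
  fixes k u :: real assumes k: "0 < k" "k < 1" and u: "u > 0"
  shows "c1 k * (besselK ((k-1)/2) u * u powr ((k-1)/2)) = c2 k * (G ((1-k)/2) (u^2/4) / Gamma ((1-k)/2) / u powr (1-k))"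
proof -
  define m where "m = (1-k)/2"
  have m: "0 < m" "m < 1" using k by (auto simp: m_def)
  have nu: "(k-1)/2 = -m" by (simp add: m_def field_simps)
  have y: "u^2/4 > 0" using u by simp
  have K: "besselK (-m) u = (1/2) * (u/2) powr m * G (-m) (u^2/4)"
    using KG(2)[of "-m" u] m u unfolding besselK_def by simp
  have S: "G m (u^2/4) = (u^2/4) powr m * G (-m) (u^2/4)"
    using G_sym[of m "u^2/4"] m y by simp
  have p1: "(u/2) powr m * u powr (-m) / (u^2/4) powr m = 2 powr m / u powr (2*m)" by (rule P1_pow[OF u])
  have cid: "c2 k = c1 k * (2 powr m / 2) * Gamma m"
    using const_id[OF k] by (simp add: m_def powr_diff)
  have goal: "c1 k * (besselK (-m) u * u powr (-m)) = c2 k * (G m (u^2/4) / Gamma m / u powr (2*m))"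
    unfolding K by (rule alg_pt[OF S p1 cid]) (use m y u in auto)
  have e1: "(k-1)/2 = -((1-k)/2)" by (simp add: diff_divide_distrib)
  have e2: "2 * ((1-k)/2) = 1 - k" by simp
  show ?thesis using goal unfolding m_def e1 e2 .
qed

lemma alg_o:
  fixes Gam Gv G1 Y y m k :: real
  assumes "Gam > 0" "y > 0" "m > 0" "k > 0" "k = 1 - m"
  shows "((1 - Gv/Gam) - (G1 * (Y/m) / Gam - y/k)) / (4*y) =
         (((Gam - Gv) - (G1 * (Y/m) - Gam/k * y)) / y) * (1/(4*Gam))"
  using assms by (simp add: field_simps)

lemma alg_asy:
  fixes c P S Q e s K :: real
  assumes "c \<noteq> 0" "Q > 0" "e > 0" "P > 0" "S > 0"
  shows "s * e * K / (P / S) = c * (K * (s * Q)) / (c * P / S * Q * (1/e))"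
  using assms by (simp add: field_simps)

theorem lemma1:
  fixes kappa :: real
  assumes "0 < kappa" and "kappa < 1"
  shows "(\<exists>\<theta> :: real \<Rightarrow> real.
           (\<forall>w lam. lam \<noteq> w \<and> lam \<noteq> - w \<longrightarrow>
              f_dens kappa w lam = c2 kappa / 2 *
                ((1 - \<theta> \<bar>lam + w\<bar>) / \<bar>lam + w\<bar> powr (1 - kappa)
               + (1 - \<theta> \<bar>lam - w\<bar>) / \<bar>lam - w\<bar> powr (1 - kappa)))
         \<and> bounded (\<theta> ` {0..})
         \<and> (\<forall>u\<ge>0. \<theta> u \<le> 1)
         \<and> (\<lambda>u. \<theta> u - (Gamma ((kappa + 1) / 2) / (2 powr (1 - kappa) * Gamma ((3 - kappa) / 2))
                         * \<bar>u\<bar> powr (1 - kappa) - 1 / (2 * (kappa + 1)) * \<bar>u\<bar>^2))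
             \<in> o[at_right 0](\<lambda>u. \<bar>u\<bar>^2))
       \<and> ((\<lambda>lam. f_dens kappa 0 lam) \<sim>[at_infinity]
           (\<lambda>lam. c1 kappa * sqrt pi / sqrt 2 * \<bar>lam\<bar> powr ((kappa - 2) / 2) * exp (- \<bar>lam\<bar>)))"
proof -
  have k: "0 < kappa" "kappa < 1" by fact+
  define m where "m = (1 - kappa)/2"
  have m: "0 < m" "m < 1" using k by (auto simp: m_def)
  have Gm: "Gamma m > 0" using m by simp
  define \<theta> where "\<theta> u = 1 - G m (u^2/4) / Gamma m" for u :: real
  have pt': "c1 kappa * (besselK ((kappa-1)/2) u * u powr ((kappa-1)/2)) = c2 kappa * ((1 - \<theta> u) / u powr (1 - kappa))"
    if "u > 0" for u
    using pt[OF k that] by (simp add: \<theta>_def m_def)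
  have P1: "\<forall>w lam. lam \<noteq> w \<and> lam \<noteq> - w \<longrightarrow>
              f_dens kappa w lam = c2 kappa / 2 *
                ((1 - \<theta> \<bar>lam + w\<bar>) / \<bar>lam + w\<bar> powr (1 - kappa)
               + (1 - \<theta> \<bar>lam - w\<bar>) / \<bar>lam - w\<bar> powr (1 - kappa))"
  proof (intro allI impI)
    fix w lam :: real assume h: "lam \<noteq> w \<and> lam \<noteq> - w"
    have a1: "\<bar>lam + w\<bar> > 0" and a2: "\<bar>lam - w\<bar> > 0" using h by auto
    show "f_dens kappa w lam = c2 kappa / 2 *
                ((1 - \<theta> \<bar>lam + w\<bar>) / \<bar>lam + w\<bar> powr (1 - kappa)
               + (1 - \<theta> \<bar>lam - w\<bar>) / \<bar>lam - w\<bar> powr (1 - kappa))"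
      unfolding f_dens_def using pt'[OF a1] pt'[OF a2] by (simp add: field_simps)
  qed
  have th01: "0 \<le> \<theta> u \<and> \<theta> u \<le> 1" for u
  proof -
    have "0 \<le> G m (u^2/4)" "G m (u^2/4) \<le> Gamma m" using G_nonneg1[of m "u^2/4"] G_le_Gamma[of m "u^2/4"] m by auto
    thus ?thesis using Gm by (simp add: \<theta>_def field_simps)
  qed
  have P2: "bounded (\<theta> ` {0..})"
    unfolding bounded_iff using th01 by (intro exI[of _ 1]) auto
  have P3: "\<forall>u\<ge>0. \<theta> u \<le> 1" using th01 by auto
  define RB where "RB y = ((Gamma m - G m y) - (Gamma (1-m) * (y powr m / m) - Gamma m / (1-m) * y)) / y" for y
  have RB: "(RB \<longlongrightarrow> 0) (at_right 0)" unfolding RB_def by (rule stepB[OF m])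
  have fl: "filterlim (\<lambda>u::real. u^2/4) (at_right 0) (at_right 0)" by real_asymp
  have RB2: "((\<lambda>u. RB (u^2/4) * (1/(4 * Gamma m))) \<longlongrightarrow> 0 * (1/(4 * Gamma m))) (at_right 0)"
    by (intro tendsto_intros filterlim_compose[OF RB fl])
  hence RB3: "((\<lambda>u. RB (u^2/4) * (1/(4 * Gamma m))) \<longlongrightarrow> 0) (at_right 0)" by (simp only: mult_zero_left)
  have P4: "(\<lambda>u. \<theta> u - (Gamma ((kappa + 1) / 2) / (2 powr (1 - kappa) * Gamma ((3 - kappa) / 2))
                         * \<bar>u\<bar> powr (1 - kappa) - 1 / (2 * (kappa + 1)) * \<bar>u\<bar>^2))
             \<in> o[at_right 0](\<lambda>u. \<bar>u\<bar>^2)"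
  proof (rule smalloI_tendsto)
    show "\<forall>\<^sub>F u in at_right 0. \<bar>u::real\<bar>^2 \<noteq> 0"
      using eventually_at_right_less[of "0::real"] by eventually_elim simp
    show "((\<lambda>u. (\<theta> u - (Gamma ((kappa + 1) / 2) / (2 powr (1 - kappa) * Gamma ((3 - kappa) / 2))
                         * \<bar>u\<bar> powr (1 - kappa) - 1 / (2 * (kappa + 1)) * \<bar>u\<bar>^2)) / \<bar>u\<bar>^2) \<longlongrightarrow> 0) (at_right 0)"
    proof (rule Lim_transform_eventually[OF RB3])
      show "\<forall>\<^sub>F u in at_right 0. RB (u^2/4) * (1/(4 * Gamma m)) = (\<theta> u - (Gamma ((kappa + 1) / 2) / (2 powr (1 - kappa) * Gamma ((3 - kappa) / 2))
                         * \<bar>u\<bar> powr (1 - kappa) - 1 / (2 * (kappa + 1)) * \<bar>u\<bar>^2)) / \<bar>u\<bar>^2"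
        using eventually_at_right_less[of "0::real"]
      proof eventually_elim
        case (elim u)
        define y where "y = u^2/4"
        have y: "y > 0" using elim by (simp add: y_def)
        have g1: "Gamma ((kappa + 1) / 2) = Gamma (1 - m)" by (simp add: m_def field_simps)
        have g2: "Gamma ((3 - kappa) / 2) = m * Gamma m"
        proof -
          have e: "(3 - kappa)/2 = m + 1" by (simp add: m_def field_simps)
          have "m \<notin> \<int>\<^sub>\<le>\<^sub>0" using m by (auto elim!: nonpos_Ints_cases)
          hence "Gamma (m + 1) = m * Gamma m" by (rule Gamma_plus1)
          thus ?thesis by (simp only: e)
        qed
        have Y: "y powr m = u powr (1 - kappa) / 2 powr (1 - kappa)"
          unfolding y_def m_def by (rule P2_pow) (use elim in simp)
        have A: "Gamma ((kappa + 1) / 2) / (2 powr (1 - kappa) * Gamma ((3 - kappa) / 2)) * \<bar>u\<bar> powr (1 - kappa)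
              = Gamma (1 - m) * (y powr m / m) / Gamma m"
          using elim m Gm unfolding g1 g2 Y by (simp add: field_simps)
        have B: "1 / (2 * (kappa + 1)) * (4 * y) = y / (1 - m)"
          using elim k by (simp add: m_def field_simps)
        have U: "\<bar>u\<bar>^2 = 4 * y" by (simp add: y_def)
        show ?case unfolding A U B RB_def \<theta>_def y_def[symmetric]
          by (rule alg_o[symmetric]) (use Gm y m in auto)
      qed
    qed
  qed
  have P5: "((\<lambda>lam. f_dens kappa 0 lam) \<sim>[at_infinity]
           (\<lambda>lam. c1 kappa * sqrt pi / sqrt 2 * \<bar>lam\<bar> powr ((kappa - 2) / 2) * exp (- \<bar>lam\<bar>)))"
  proof (rule asymp_equivI')
    define R where "R x = sqrt x * exp x * besselK ((kappa-1)/2) x / (sqrt pi / sqrt 2)" for x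
    have nu: "\<bar>(kappa-1)/2\<bar> < 1" using k by auto
    have "((\<lambda>x. sqrt x * exp x * besselK ((kappa-1)/2) x) \<longlongrightarrow> sqrt pi / sqrt 2) at_top"
      using K_asymp[OF nu] unfolding besselK_def .
    hence "(R \<longlongrightarrow> (sqrt pi / sqrt 2) / (sqrt pi / sqrt 2)) at_top"
      unfolding R_def by (intro tendsto_intros) auto
    hence R1: "(R \<longlongrightarrow> 1) at_top" by simp
    have abs_lim: "filterlim (\<lambda>lam::real. \<bar>lam\<bar>) at_top at_infinity"
    proof -
      have "filterlim (\<lambda>lam::real. norm lam) at_top (at_infinity :: real filter)"
        by (rule filterlim_at_infinity_imp_norm_at_top[OF filterlim_ident])
      thus ?thesis by simp
    qed
    have RR: "((\<lambda>lam. R \<bar>lam\<bar>) \<longlongrightarrow> 1) at_infinity" by (rule filterlim_compose[OF R1 abs_lim])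
    have c1pos: "c1 kappa > 0" unfolding c1_def using k by simp
    show "((\<lambda>lam. f_dens kappa 0 lam / (c1 kappa * sqrt pi / sqrt 2 * \<bar>lam\<bar> powr ((kappa - 2) / 2) * exp (- \<bar>lam\<bar>))) \<longlongrightarrow> 1) at_infinity"
    proof (rule Lim_transform_eventually[OF RR])
      have "eventually (\<lambda>lam::real. 1 \<le> norm lam) at_infinity" by (auto simp: eventually_at_infinity)
      thus "\<forall>\<^sub>F lam in at_infinity. R \<bar>lam\<bar> = f_dens kappa 0 lam / (c1 kappa * sqrt pi / sqrt 2 * \<bar>lam\<bar> powr ((kappa - 2) / 2) * exp (- \<bar>lam\<bar>))"
      proof eventually_elim
        case (elim lam)
        define x where "x = \<bar>lam\<bar>"
        have x: "x > 0" using elim by (simp add: x_def)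
        have f: "f_dens kappa 0 lam = c1 kappa * (besselK ((kappa-1)/2) x * x powr ((kappa-1)/2))"
          unfolding f_dens_def x_def by simp
        have pw: "x powr ((kappa-1)/2) = sqrt x * x powr ((kappa-2)/2)"
        proof -
          have e: "(kappa-1)/2 = 1/2 + (kappa-2)/2" by (simp add: field_simps)
          have "x powr ((kappa-1)/2) = x powr (1/2 + (kappa-2)/2)" by (simp only: e)
          hence "x powr ((kappa-1)/2) = x powr (1/2) * x powr ((kappa-2)/2)" by (simp only: powr_add)
          thus ?thesis using x by (simp add: powr_half_sqrt)
        qed
        have ex: "exp (- x) = 1 / exp x" by (simp add: exp_minus field_simps)
        show ?case unfolding f x_def[symmetric] R_def pw ex
          by (rule alg_asy) (use c1pos x in auto)
      qed
    qed
  qed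
  show ?thesis using P1 P2 P3 P4 P5 by blast
qed

end
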